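(* Let $G=(V,E)$ be a connected, loopless and bridgeless graph with $n$ vertices and $m$ edges, and write $T(G;x,y)=\sum_{i,j}t_{i,j}x^iy^j$. Let $p(G)$ be the number of parallel classes and $p^*(G)$ the number of non-trivial parallel classes of $G$, and let $\Delta(\tilde G)$ be the number of triangles of $\tilde G$, the simple graph obtained from $G$ by replacing each parallel class by a single edge. Then \begin{enumerate} \item $t_{n-1,0}=1$; \item $t_{n-2,0}=p(G)-n+1$; \item $t_{n-3,0}=\binom{n-1}{2}-(n-2)\,p(G)+\binom{p(G)}{2}-\Delta(\tilde G)$; \item $t_{n-2,1}=p^*(G)$; \item $t_{n-3,1}=-p^*(G)(n-2)+\sum_{A}p(G/A)+\Delta(\tilde G)$, where the sum runs over all non-trivial parallel classes $A\subseteq E$ of $G$ and $G/A$ is the graph obtained by contracting all edges of $A$. \end{enumerate}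
   Context: Graphs are finite and may have parallel edges. The Tutte polynomial is $T(G;x,y)=\sum_{A\subseteq E}(x-1)^{\rho(E)-\rho(A)}(y-1)^{\gamma(A)}$, where for $A\subseteq E$, $c(A)$ is the number of connected components of the spanning subgraph $(V,A)$, $\rho(A)=|V|-c(A)$, $\gamma(A)=|A|-|V|+c(A)$. A parallel class of $G$ is a maximal subset of $E$ all of whose edges have the same pair of endvertices; parallel classes partition $E$. A parallel class is trivial if it has exactly one edge, non-trivial otherwise. *)

theory Defs
  imports "HOL-Computational_Algebra.Polynomial"
begin

text \<open>A finite multigraph is given by a vertex set V, an edge set E and a map
  ends assigning to each edge its set of endvertices (one vertex for a loop,
  two for an ordinary edge).\<close>

definition multigraph :: "'v set \<Rightarrow> 'e set \<Rightarrow> ('e \<Rightarrow> 'v set) \<Rightarrow> bool" where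
  "multigraph V E ends \<longleftrightarrow> finite V \<and> finite E \<and>
     (\<forall>e\<in>E. ends e \<subseteq> V \<and> (card (ends e) = 1 \<or> card (ends e) = 2))"

definition loopless :: "'e set \<Rightarrow> ('e \<Rightarrow> 'v set) \<Rightarrow> bool" where
  "loopless E ends \<longleftrightarrow> (\<forall>e\<in>E. card (ends e) = 2)"

definition conn_rel :: "'v set \<Rightarrow> 'e set \<Rightarrow> ('e \<Rightarrow> 'v set) \<Rightarrow> ('v \<times> 'v) set" where
  "conn_rel V A ends =
     (Id_on V \<union> {(u,w). \<exists>e\<in>A. u \<in> ends e \<and> w \<in> ends e})\<^sup>* \<inter> (V \<times> V)"

definition ncomp :: "'v set \<Rightarrow> 'e set \<Rightarrow> ('e \<Rightarrow> 'v set) \<Rightarrow> nat" where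
  "ncomp V A ends = card (V // conn_rel V A ends)"

definition connected_graph :: "'v set \<Rightarrow> 'e set \<Rightarrow> ('e \<Rightarrow> 'v set) \<Rightarrow> bool" where
  "connected_graph V E ends \<longleftrightarrow> V \<noteq> {} \<and> ncomp V E ends = 1"

definition bridgeless :: "'v set \<Rightarrow> 'e set \<Rightarrow> ('e \<Rightarrow> 'v set) \<Rightarrow> bool" where
  "bridgeless V E ends \<longleftrightarrow> (\<forall>e\<in>E. ncomp V (E - {e}) ends = ncomp V E ends)"

definition rank :: "'v set \<Rightarrow> 'e set \<Rightarrow> ('e \<Rightarrow> 'v set) \<Rightarrow> nat" where
  "rank V A ends = card V - ncomp V A ends"

definition nullity :: "'v set \<Rightarrow> 'e set \<Rightarrow> ('e \<Rightarrow> 'v set) \<Rightarrow> nat" where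
  "nullity V A ends = (card A + ncomp V A ends) - card V"

text \<open>Tutte polynomial as a polynomial in y whose coefficients are polynomials in x:
  (x-1) is the constant [:[:-1,1:]:], (y-1) is [:[:-1:], 1:].\<close>
definition tutte :: "'v set \<Rightarrow> 'e set \<Rightarrow> ('e \<Rightarrow> 'v set) \<Rightarrow> int poly poly" where
  "tutte V E ends = (\<Sum>A\<in>Pow E.
      [: [:-1, 1:] ^ (rank V E ends - rank V A ends) :] *
      [: [:-1:], 1 :] ^ (nullity V A ends))"

text \<open>t_{i,j}: coefficient of x^i y^j (zero for negative indices).\<close>
definition tcoeff :: "'v set \<Rightarrow> 'e set \<Rightarrow> ('e \<Rightarrow> 'v set) \<Rightarrow> int \<Rightarrow> int \<Rightarrow> int" where
  "tcoeff V E ends i j =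
     (if i < 0 \<or> j < 0 then 0 else coeff (coeff (tutte V E ends) (nat j)) (nat i))"

definition parallel_classes :: "'e set \<Rightarrow> ('e \<Rightarrow> 'v set) \<Rightarrow> 'e set set" where
  "parallel_classes E ends = (\<lambda>e. {f\<in>E. ends f = ends e}) ` E"

definition npar :: "'e set \<Rightarrow> ('e \<Rightarrow> 'v set) \<Rightarrow> nat" where
  "npar E ends = card (parallel_classes E ends)"

definition npar_nontriv :: "'e set \<Rightarrow> ('e \<Rightarrow> 'v set) \<Rightarrow> nat" where
  "npar_nontriv E ends = card {A \<in> parallel_classes E ends. card A \<ge> 2}"

definition ntriangles :: "'v set \<Rightarrow> 'e set \<Rightarrow> ('e \<Rightarrow> 'v set) \<Rightarrow> nat" where
  "ntriangles V E ends = card {S. S \<subseteq> V \<and> card S = 3 \<and>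
      (\<forall>u\<in>S. \<forall>w\<in>S. u \<noteq> w \<longrightarrow> {u, w} \<in> ends ` E)}"

text \<open>Contraction G/A of all edges of A: vertices are the components of (V,A),
  edges are E - A, with endpoints mapped to their components.\<close>
definition contract_V :: "'v set \<Rightarrow> 'e set \<Rightarrow> ('e \<Rightarrow> 'v set) \<Rightarrow> 'e set \<Rightarrow> 'v set set" where
  "contract_V V E ends A = V // conn_rel V A ends"

definition contract_E :: "'v set \<Rightarrow> 'e set \<Rightarrow> ('e \<Rightarrow> 'v set) \<Rightarrow> 'e set \<Rightarrow> 'e set" where
  "contract_E V E ends A = E - A"

definition contract_ends :: "'v set \<Rightarrow> 'e set \<Rightarrow> ('e \<Rightarrow> 'v set) \<Rightarrow> 'e set \<Rightarrow> 'e \<Rightarrow> 'v set set" where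
  "contract_ends V E ends A e = (\<lambda>w. conn_rel V A ends `` {w}) ` ends e"

end

theory Submission
  imports Defs
begin


lemma coeff_xm1_pow: "coeff ([:-1, 1:] ^ a) i = (of_nat (a choose i)) * (-1::'a::comm_ring_1) ^ (a - i)"
proof (cases "i \<le> a")
  case True then show ?thesis by (simp add: coeff_linear_poly_power)
next
  case False
  have "degree ([:-1, 1::'a:] ^ a) \<le> a"
    using degree_power_le[of "[:-1, 1::'a:]" a] by (simp add: degree_pCons_le order_trans)
  then show ?thesis using False by (simp add: coeff_eq_0 binomial_eq_0)
qed

lemma coeff_ym1_pow: "coeff ([: [:-1:], 1 :] ^ b) j = [: int (b choose j) * (-1) ^ (b - j) :]"
proof -
  have e: "[: [:-1:], 1 :] = [: -1, 1 :: int poly :]" by (simp add: one_pCons)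
  show ?thesis unfolding e coeff_xm1_pow
    by (simp add: one_pCons of_nat_poly poly_const_pow flip: of_int_poly) 
qed


lemma coeff_tutte: "coeff (coeff (tutte V E ends) j) i =
  (\<Sum>A\<in>Pow E. (int ((rank V E ends - rank V A ends) choose i) * (-1) ^ ((rank V E ends - rank V A ends) - i)) *
      (int (nullity V A ends choose j) * (-1) ^ (nullity V A ends - j)))"
  unfolding tutte_def by (simp add: coeff_sum coeff_ym1_pow coeff_xm1_pow mult.commute)

lemma conn_rel_image: "conn_rel V A ends = conn_rel V (ends ` A) id"
  unfolding conn_rel_def by (intro arg_cong2[where f="(\<inter>)"] arg_cong[where f=rtrancl] refl) auto

lemma conn_rel_closed:
  assumes "(x,y) \<in> conn_rel V S id" "x \<in> X" "\<And>s. s \<in> S \<Longrightarrow> s \<inter> X \<noteq> {} \<Longrightarrow> s \<subseteq> X"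
  shows "y \<in> X"
proof -
  have "(x,y) \<in> (Id_on V \<union> {(u,w). \<exists>e\<in>S. u \<in> id e \<and> w \<in> id e})\<^sup>*"
    using assms(1) unfolding conn_rel_def by auto
  then show ?thesis
  proof (induction rule: rtrancl_induct)
    case base then show ?case using assms(2) .
  next
    case (step y z) then show ?case using assms(3) by (auto simp: Id_on_def) 
  qed
qed

lemma conn_rel_equiv:
  assumes "\<And>s. s \<in> S \<Longrightarrow> s \<subseteq> V"
  shows "equiv V (conn_rel V S id)"
proof -
  let ?R = "Id_on V \<union> {(u,w). \<exists>e\<in>S. u \<in> id e \<and> w \<in> id e}"
  have "sym ?R" by (auto simp: sym_def Id_on_def)
  then have sR: "sym (?R\<^sup>*)" by (rule sym_rtrancl)
  show ?thesis unfolding equiv_def conn_rel_def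
  proof (intro conjI)
    show "refl_on V (?R\<^sup>* \<inter> V \<times> V)" by (auto simp: refl_on_def)
    show "?R\<^sup>* \<inter> V \<times> V \<subseteq> V \<times> V" by auto
    show "sym (?R\<^sup>* \<inter> V \<times> V)" using sR by (auto simp: sym_def)
    show "trans (?R\<^sup>* \<inter> V \<times> V)" by (auto simp: trans_def)
  qed
qed

lemma conn_rel_edge:
  assumes "s \<in> S" "x \<in> s" "y \<in> s" "s \<subseteq> V"
  shows "(x,y) \<in> conn_rel V S id"
  using assms unfolding conn_rel_def by (auto intro!: r_into_rtrancl)


locale pairs =
  fixes V :: "'v set" and S :: "'v set set"
  assumes finV: "finite V" and S2: "\<And>s. s \<in> S \<Longrightarrow> s \<subseteq> V \<and> card s = 2"
begin

abbreviation "R \<equiv> conn_rel V S id"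
abbreviation "W \<equiv> \<Union>S"

lemma eqv: "equiv V R" using S2 by (intro conn_rel_equiv) auto

lemma WV: "W \<subseteq> V" using S2 by auto

lemma finW: "finite W" using WV finV finite_subset by blast

lemma class_outside: assumes "x \<in> V - W" shows "R `` {x} = {x}"
proof
  show "R `` {x} \<subseteq> {x}"
  proof
    fix y assume "y \<in> R `` {x}"
    then have "(x,y) \<in> R" by auto
    moreover have "s \<subseteq> {x}" if "s \<in> S" "s \<inter> {x} \<noteq> {}" for s
      using that assms by auto
    ultimately show "y \<in> {x}" using conn_rel_closed[of x y V S "{x}"] by blast
  qed
  show "{x} \<subseteq> R `` {x}" using assms eqv by (auto simp: equiv_def refl_on_def)
qed

lemma class_inside: assumes "x \<in> W" shows "R `` {x} \<subseteq> W"
proof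
  fix y assume "y \<in> R `` {x}"
  then have "(x,y) \<in> R" by auto
  then show "y \<in> W" using conn_rel_closed[of x y V S W] assms by blast
qed

lemma quot_split: "V // R = (\<lambda>x. {x}) ` (V - W) \<union> W // R"
proof -
  have "V = (V - W) \<union> W" using WV by auto
  then have "V // R = (V - W) // R \<union> W // R" unfolding quotient_def by blast
  also have "(V - W) // R = (\<lambda>x. {x}) ` (V - W)"
    unfolding quotient_def using class_outside by auto
  finally show ?thesis .
qed

lemma quot_in_W: "X \<in> W // R \<Longrightarrow> X \<subseteq> W"
  unfolding quotient_def using class_inside by auto

lemma quot_W_ge2: assumes "X \<in> W // R" shows "2 \<le> card X" "finite X"
proof -
  obtain x where x: "x \<in> W" "X = R `` {x}" using assms unfolding quotient_def by auto
  then obtain s where s: "s \<in> S" "x \<in> s" by auto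
  then have "card s = 2" "s \<subseteq> V" using S2 by auto
  then obtain a b where ab: "s = {a,b}" "a \<noteq> b" by (meson card_2_iff)
  have "s \<subseteq> X"
  proof
    fix y assume "y \<in> s"
    then have "(x,y) \<in> R" using conn_rel_edge[of s S x y V] s \<open>s \<subseteq> V\<close> by blast
    then show "y \<in> X" using x(2) by blast
  qed
  moreover show "finite X" using quot_in_W[OF assms] finW finite_subset by blast
  ultimately show "2 \<le> card X" using \<open>card s = 2\<close> card_mono by metis
qed

lemma edge_in_class: assumes "s \<in> S" shows "\<exists>X\<in>W // R. s \<subseteq> X"
proof -
  obtain x where "x \<in> s" using S2[OF assms] by fastforce
  then have "x \<in> W" using assms by auto
  moreover have "s \<subseteq> R `` {x}"
  proof
    fix y assume "y \<in> s"
    then show "y \<in> R `` {x}" using conn_rel_edge[of s S x y V] assms \<open>x \<in> s\<close> S2 by blast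
  qed
  ultimately show ?thesis unfolding quotient_def by auto
qed

lemma sum_card_W: "card W = (\<Sum>X\<in>W // R. card X)"
proof -
  have "\<Union>(W // R) = W"
  proof
    show "\<Union> (W // R) \<subseteq> W" using quot_in_W by auto
    show "W \<subseteq> \<Union> (W // R)" using eqv WV unfolding quotient_def equiv_def refl_on_def by blast
  qed
  moreover have "pairwise disjnt (W // R)"
  proof -
    have "W // R \<subseteq> V // R" using WV unfolding quotient_def by auto
    then show ?thesis using quotient_disj[OF eqv] unfolding pairwise_def disjnt_def by blast
  qed
  moreover have "\<And>X. X \<in> W // R \<Longrightarrow> finite X" by (rule quot_W_ge2(2))
  ultimately show ?thesis using card_Union_disjoint[of "W // R"] by simp
qed

lemma finQ: "finite (W // R)"
proof -
  have "W // R = (\<lambda>x. R``{x}) ` W" unfolding quotient_def by auto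
  then show ?thesis using finW by simp
qed

lemma twice_k: "2 * card (W // R) \<le> card W"
proof -
  have "2 * card (W // R) = (\<Sum>X\<in>W // R. 2)" by simp
  also have "\<dots> \<le> (\<Sum>X\<in>W // R. card X)" by (intro sum_mono quot_W_ge2(1))
  finally show ?thesis using sum_card_W by simp
qed

lemma k_pos: "W \<noteq> {} \<Longrightarrow> 1 \<le> card (W // R)"
  using finQ by (auto simp: quotient_def card_gt_0_iff[symmetric] Suc_le_eq)

lemma ncomp_eq: "ncomp V S id = card V - card W + card (W // R)"
proof -
  have d: "(\<lambda>x. {x}) ` (V - W) \<inter> W // R = {}"
    using quot_in_W by auto
  have "ncomp V S id = card ((\<lambda>x. {x}) ` (V - W)) + card (W // R)"
    unfolding ncomp_def quot_split using d finV finQ by (intro card_Un_disjoint) auto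
  also have "card ((\<lambda>x. {x}) ` (V - W)) = card V - card W"
    using card_image[of "\<lambda>x. {x}" "V - W"] finW WV by (simp add: card_Diff_subset)
  finally show ?thesis .
qed

end


context pairs begin

lemma finS: "finite S"
proof -
  have "S \<subseteq> Pow V" using S2 by auto
  then show ?thesis using finV finite_subset by blast
qed

lemma card_S_le: "card S \<le> card W choose 2"
proof -
  have "S \<subseteq> {t. t \<subseteq> W \<and> card t = 2}" using S2 by auto
  then have "card S \<le> card {t. t \<subseteq> W \<and> card t = 2}" using finW by (intro card_mono) auto
  then show ?thesis using n_subsets[OF finW] by simp
qed

lemma cardW_le: "card W \<le> card V" using WV finV card_mono by blast

lemma k_one: assumes "card W = 3" shows "card (W // R) = 1"
proof -
  have "W \<noteq> {}" using assms by (metis card.empty zero_neq_numeral)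
  then show ?thesis using twice_k k_pos assms by linarith
qed

lemma c0: "S = {} \<Longrightarrow> ncomp V S id = card V"
  using ncomp_eq by (simp add: quotient_def)

lemma c1: assumes "card S = 1" shows "ncomp V S id = card V - 1"
proof -
  obtain s where s: "S = {s}" using assms card_1_singletonE by blast
  then have "card W = 2" using S2 by auto
  moreover have "W \<noteq> {}" using \<open>card W = 2\<close> by (metis card.empty zero_neq_numeral)
  moreover have "card (W // R) = 1" using twice_k k_pos \<open>card W = 2\<close> calculation(2) by linarith
  ultimately show ?thesis using ncomp_eq cardW_le by simp
qed

lemma c2: assumes "card S = 2" shows "ncomp V S id = card V - 2"
proof -
  obtain s t where st: "S = {s,t}" "s \<noteq> t" using assms card_2_iff by metis
  have s2: "card s = 2" "card t = 2" "s \<subseteq> V" "t \<subseteq> V" using S2 st by auto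
  have fs: "finite s" "finite t" using s2 finite_subset[OF _ finV] by auto
  have W: "W = s \<union> t" using st by auto
  have cu: "card (s \<union> t) + card (s \<inter> t) = 4" using card_Un_Int[OF fs] s2 by simp
  have ne: "s \<inter> t \<noteq> s"
  proof
    assume "s \<inter> t = s"
    then have "s \<subseteq> t" by blast
    then have "s = t" using card_subset_eq[OF fs(2)] s2 by simp
    then show False using st(2) by simp
  qed
  have "s \<inter> t \<subset> s" using ne by blast
  then have "card (s \<inter> t) < card s" by (rule psubset_card_mono[OF fs(1)])
  then have "card (s \<inter> t) < 2" using s2 by simp
  moreover have "card W + card (s \<inter> t) = 4" using cu W by simp
  ultimately have "card W = 3 \<or> card W = 4" by linarith
  then show ?thesis
  proof
    assume "card W = 3" then show ?thesis using k_one ncomp_eq cardW_le by simp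
  next
    assume W4: "card W = 4"
    then have "card (s \<inter> t) = 0" using cu W by simp
    then have dj: "s \<inter> t = {}" using fs by (simp add: card_eq_0_iff)
    obtain a where a: "a \<in> s" using s2 by fastforce
    obtain b where b: "b \<in> t" using s2 by fastforce
    have Ra: "R `` {a} \<subseteq> s"
    proof
      fix y assume "y \<in> R `` {a}"
      then have "(a,y) \<in> R" by auto
      moreover have "u \<subseteq> s" if "u \<in> S" "u \<inter> s \<noteq> {}" for u using that st dj by auto
      ultimately show "y \<in> s" using conn_rel_closed[of a y V S s] a by blast
    qed
    have Rb: "R `` {b} \<subseteq> t"
    proof
      fix y assume "y \<in> R `` {b}"
      then have "(b,y) \<in> R" by auto
      moreover have "u \<subseteq> t" if "u \<in> S" "u \<inter> t \<noteq> {}" for u using that st dj by auto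
      ultimately show "y \<in> t" using conn_rel_closed[of b y V S t] b by blast
    qed
    have "a \<in> R `` {a}" "b \<in> R `` {b}" using eqv a b s2 unfolding equiv_def refl_on_def by auto
    then have neq: "R `` {a} \<noteq> R `` {b}" using Ra Rb dj by blast
    have "a \<in> W" "b \<in> W" using a b W by auto
    then have "R `` {a} \<in> W // R" "R `` {b} \<in> W // R" by (auto intro: quotientI)
    then have "{R `` {a}, R `` {b}} \<subseteq> W // R" by blast
    then have "card {R `` {a}, R `` {b}} \<le> card (W // R)" by (rule card_mono[OF finQ])
    then have "2 \<le> card (W // R)" using neq by simp
    then have "card (W // R) = 2" using twice_k W4 by linarith
    then show ?thesis using ncomp_eq W4 cardW_le by simp
  qed
qed

lemma c3: assumes "card W = 3" shows "ncomp V S id = card V - 2"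
  using k_one[OF assms] ncomp_eq assms cardW_le by simp

lemma cbig: assumes "3 \<le> card S" "\<not> (card S = 3 \<and> card W = 3)"
  shows "ncomp V S id + 3 \<le> card V"
proof -
  have cl: "card S \<le> card W choose 2" by (rule card_S_le)
  have g3: "card W \<ge> 3"
  proof (rule ccontr)
    assume "\<not> 3 \<le> card W"
    then have "card W = 0 \<or> card W = 1 \<or> card W = 2" by arith
    then have "card W choose 2 \<le> 1" by (auto simp: binomial_eq_0)
    then show False using cl assms by simp
  qed
  have n3: "card W \<noteq> 3"
  proof
    assume "card W = 3"
    then have "card S \<le> 3" using cl by (simp add: choose_two)
    then show False using assms \<open>card W = 3\<close> by simp
  qed
  have w4: "card W = 4 \<Longrightarrow> card (W // R) = 1"
  proof -
    assume W4: "card W = 4"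
    have "card (W // R) \<le> 2" using twice_k W4 by simp
    moreover have "card (W // R) \<noteq> 2"
    proof
      assume k2: "card (W // R) = 2"
      have cX: "card X = 2" if X: "X \<in> W // R" for X
      proof -
        have "card W = card X + (\<Sum>Y\<in>W // R - {X}. card Y)"
          using sum_card_W sum.remove[OF finQ X] by simp
        moreover have "(\<Sum>Y\<in>W // R - {X}. 2) \<le> (\<Sum>Y\<in>W // R - {X}. card Y)"
          by (intro sum_mono quot_W_ge2(1)) auto
        moreover have "card (W // R - {X}) = 1" using k2 X finQ by simp
        ultimately show ?thesis using W4 quot_W_ge2(1)[OF X] by simp
      qed
      have "S \<subseteq> W // R"
      proof
        fix s assume s: "s \<in> S"
        then obtain X where X: "X \<in> W // R" "s \<subseteq> X" using edge_in_class by blast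
        then have "s = X" using cX[OF X(1)] S2[OF s] quot_W_ge2(2)[OF X(1)] card_subset_eq by metis
        then show "s \<in> W // R" using X by simp
      qed
      then have "card S \<le> 2" using card_mono[OF finQ] k2 by fastforce
      then show False using assms by simp
    qed
    moreover have "1 \<le> card (W // R)" using k_pos W4 by (metis card.empty zero_neq_numeral)
    ultimately show "card (W // R) = 1" by linarith
  qed
  have "card W = 4 \<or> 5 \<le> card W" using g3 n3 by linarith
  then show ?thesis
  proof
    assume "card W = 4"
    then show ?thesis using w4 ncomp_eq cardW_le by simp
  next
    assume "5 \<le> card W"
    then show ?thesis using ncomp_eq cardW_le twice_k by linarith
  qed
qed

end


lemma pow_sum0: "finite C \<Longrightarrow> (\<Sum>B\<in>Pow C. (-1::int) ^ card B) = (if C = {} then 1 else 0)"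
proof (induction C rule: finite_induct)
  case empty then show ?case by simp
next
  case (insert x C)
  have inj: "inj_on (insert x) (Pow C)" using insert(2) by (auto simp: inj_on_def)
  have d: "Pow C \<inter> insert x ` Pow C = {}" using insert(2) by auto
  have "(\<Sum>B\<in>Pow (insert x C). (-1::int) ^ card B) =
        (\<Sum>B\<in>Pow C. (-1::int) ^ card B) + (\<Sum>B\<in>insert x ` Pow C. (-1::int) ^ card B)"
    unfolding Pow_insert using insert(1) d by (intro sum.union_disjoint) auto
  also have "(\<Sum>B\<in>insert x ` Pow C. (-1::int) ^ card B) = (\<Sum>B\<in>Pow C. (-1::int) ^ card (insert x B))"
    using sum.reindex[OF inj] by simp
  also have "\<dots> = (\<Sum>B\<in>Pow C. - ((-1::int) ^ card B))"
  proof (intro sum.cong refl)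
    fix B assume "B \<in> Pow C"
    then have "x \<notin> B" "finite B" using insert(1,2) finite_subset by auto
    then show "(-1::int) ^ card (insert x B) = - ((-1) ^ card B)" by simp
  qed
  finally show ?case by (simp add: sum_negf)
qed

lemma pow_sum1: "finite C \<Longrightarrow> (\<Sum>B\<in>Pow C. (-1::int) ^ card B * int (card B)) = (if card C = 1 then -1 else 0)"
proof (induction C rule: finite_induct)
  case empty then show ?case by simp
next
  case (insert x C)
  have inj: "inj_on (insert x) (Pow C)" using insert(2) by (auto simp: inj_on_def)
  have d: "Pow C \<inter> insert x ` Pow C = {}" using insert(2) by auto
  let ?f = "\<lambda>B. (-1::int) ^ card B * int (card B)"
  have "(\<Sum>B\<in>Pow (insert x C). ?f B) = (\<Sum>B\<in>Pow C. ?f B) + (\<Sum>B\<in>insert x ` Pow C. ?f B)"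
    unfolding Pow_insert using insert(1) d by (intro sum.union_disjoint) auto
  also have "(\<Sum>B\<in>insert x ` Pow C. ?f B) = (\<Sum>B\<in>Pow C. ?f (insert x B))"
    using sum.reindex[OF inj] by simp
  also have "\<dots> = (\<Sum>B\<in>Pow C. - ?f B - (-1::int) ^ card B)"
  proof (intro sum.cong refl)
    fix B assume "B \<in> Pow C"
    then have "x \<notin> B" "finite B" using insert(1,2) finite_subset by auto
    then show "?f (insert x B) = - ?f B - (-1::int) ^ card B" by (simp add: algebra_simps)
  qed
  also have "\<dots> = - (\<Sum>B\<in>Pow C. ?f B) - (\<Sum>B\<in>Pow C. (-1::int) ^ card B)"
    by (simp add: sum_subtractf sum_negf)
  finally show ?case using pow_sum0[OF insert(1)] insert(1,2) by (simp add: card_insert_if)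
qed

lemma pow_sum0': "finite C \<Longrightarrow> C \<noteq> {} \<Longrightarrow> (\<Sum>B\<in>Pow C - {{}}. (-1::int) ^ card B) = -1"
  using pow_sum0[of C] sum.remove[of "Pow C" "{}" "\<lambda>B. (-1::int) ^ card B"] by simp

lemma pow_sum1': "finite C \<Longrightarrow> (\<Sum>B\<in>Pow C - {{}}. (-1::int) ^ card B * int (card B)) = (if card C = 1 then -1 else 0)"
  using pow_sum1[of C] sum.remove[of "Pow C" "{}" "\<lambda>B. (-1::int) ^ card B * int (card B)"] by simp

locale tg =
  fixes V :: "'v set" and E :: "'e set" and ends :: "'e \<Rightarrow> 'v set"
  assumes mg: "multigraph V E ends" and cg: "connected_graph V E ends" and ll: "loopless E ends"
begin

lemma finV: "finite V" and finE: "finite E" using mg by (auto simp: multigraph_def)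
lemma ends2: "e \<in> E \<Longrightarrow> ends e \<subseteq> V \<and> card (ends e) = 2"
  using mg ll by (auto simp: multigraph_def loopless_def)
lemma Vne: "V \<noteq> {}" and ncE: "ncomp V E ends = 1" using cg by (auto simp: connected_graph_def)

definition "P = ends ` E"
definition "cls s = {e\<in>E. ends e = s}"
definition "fib S = {A. A \<subseteq> E \<and> ends ` A = S}"
definition "N = {s\<in>P. 2 \<le> card (cls s)}"

lemma finP: "finite P" unfolding P_def using finE by simp

lemma pairsI: "S \<subseteq> P \<Longrightarrow> pairs V S"
  unfolding pairs_def P_def using finV ends2 by auto

lemma fin_cls: "finite (cls s)" unfolding cls_def using finE by simp
lemma cls_ne: "s \<in> P \<Longrightarrow> cls s \<noteq> {}" unfolding cls_def P_def by auto

lemma fib_empty: "fib {} = {{}}" unfolding fib_def by auto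

lemma fib_insert:
  assumes "s \<in> P" "s \<notin> S"
  shows "fib (insert s S) = (\<lambda>(B,A). B \<union> A) ` ((Pow (cls s) - {{}}) \<times> fib S)"
proof
  show "fib (insert s S) \<subseteq> (\<lambda>(B,A). B \<union> A) ` ((Pow (cls s) - {{}}) \<times> fib S)"
  proof
    fix A assume A: "A \<in> fib (insert s S)"
    then have AE: "A \<subseteq> E" and Ai: "ends ` A = insert s S" unfolding fib_def by auto
    let ?B = "A \<inter> cls s" and ?A = "A - cls s"
    have "s \<in> ends ` A" using Ai by simp
    then obtain e0 where "e0 \<in> A" "ends e0 = s" by blast
    then have "e0 \<in> ?B" using AE unfolding cls_def by auto
    then have "?B \<noteq> {}" by blast
    moreover have "?B \<in> Pow (cls s)" by auto
    moreover have "?A \<in> fib S"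
    proof -
      have "ends ` ?A \<subseteq> S" using Ai AE unfolding cls_def by auto
      moreover have "S \<subseteq> ends ` ?A"
      proof
        fix t assume "t \<in> S"
        then obtain e where "e \<in> A" "ends e = t" using Ai by (metis imageE insertCI)
        then show "t \<in> ends ` ?A" using assms(2) \<open>t \<in> S\<close> unfolding cls_def by auto
      qed
      ultimately show ?thesis using AE unfolding fib_def by auto
    qed
    moreover have "A = ?B \<union> ?A" by auto
    ultimately have "(?B, ?A) \<in> (Pow (cls s) - {{}}) \<times> fib S" "A = (\<lambda>(B,A). B \<union> A) (?B, ?A)" by auto
    then show "A \<in> (\<lambda>(B,A). B \<union> A) ` ((Pow (cls s) - {{}}) \<times> fib S)" by (rule rev_image_eqI)
  qed
  show "(\<lambda>(B,A). B \<union> A) ` ((Pow (cls s) - {{}}) \<times> fib S) \<subseteq> fib (insert s S)"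
  proof
    fix X assume "X \<in> (\<lambda>(B,A). B \<union> A) ` ((Pow (cls s) - {{}}) \<times> fib S)"
    then obtain B A where X: "X = B \<union> A" "B \<subseteq> cls s" "B \<noteq> {}" "A \<in> fib S" by auto
    have "ends ` B = {s}" using X(2,3) unfolding cls_def by auto
    then show "X \<in> fib (insert s S)" using X unfolding fib_def cls_def by auto
  qed
qed

lemma fib_inj:
  assumes "s \<notin> S"
  shows "inj_on (\<lambda>(B,A). B \<union> A) ((Pow (cls s) - {{}}) \<times> fib S)"
proof (rule inj_onI)
  fix x y assume x: "x \<in> (Pow (cls s) - {{}}) \<times> fib S" and y: "y \<in> (Pow (cls s) - {{}}) \<times> fib S"
    and e: "(\<lambda>(B,A). B \<union> A) x = (\<lambda>(B,A). B \<union> A) y"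
  obtain B A where xa: "x = (B, A)" by (cases x)
  obtain B' A' where ya: "y = (B', A')" by (cases y)
  have h: "B \<subseteq> cls s" "A \<in> fib S" "B' \<subseteq> cls s" "A' \<in> fib S" "B \<union> A = B' \<union> A'"
    using x y e xa ya by auto
  have "X \<inter> cls s = {}" if "X \<in> fib S" for X
  proof -
    { fix e assume "e \<in> X" "e \<in> cls s"
      then have "s \<in> ends ` X" unfolding cls_def by auto
      then have False using that assms unfolding fib_def by auto }
    then show ?thesis by blast
  qed
  then have "A \<inter> cls s = {}" "A' \<inter> cls s = {}" using h(2,4) by auto
  then have "B = B' \<and> A = A'" using h by blast
  then show "x = y" using xa ya by simp
qed

lemma fin_fib: "finite (fib S)"
proof -
  have "fib S \<subseteq> Pow E" unfolding fib_def by auto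
  then show ?thesis using finE finite_subset by blast
qed

lemma fib_card:
  assumes "A \<in> fib S" shows "card S \<le> card A"
proof -
  have "A \<subseteq> E" "ends ` A = S" using assms unfolding fib_def by auto
  moreover have "finite A" using \<open>A \<subseteq> E\<close> finE finite_subset by blast
  ultimately show ?thesis using card_image_le[of A ends] by simp
qed

lemma fib_sums:
  assumes "S \<subseteq> P"
  shows "(\<Sum>A\<in>fib S. (-1::int) ^ card A) = (-1) ^ card S \<and>
         (\<Sum>A\<in>fib S. (-1::int) ^ card A * int (card A)) = (-1) ^ card S * int (card (S - N))"
proof -
  have "finite S" using assms finP finite_subset by blast
  then show ?thesis using assms
  proof (induction S rule: finite_induct)
    case empty then show ?case by (simp add: fib_empty)
  next
    case (insert s S)
    have sP: "s \<in> P" and SP: "S \<subseteq> P" using insert by auto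
    note IH = insert(3)[OF SP]
    let ?X = "(Pow (cls s) - {{}}) \<times> fib S"
    have dj: "\<And>B A. (B, A) \<in> ?X \<Longrightarrow> B \<inter> A = {} \<and> finite B \<and> finite A"
    proof -
      fix B A assume "(B, A) \<in> ?X"
      then have "B \<subseteq> cls s" "A \<in> fib S" by auto
      then show "B \<inter> A = {} \<and> finite B \<and> finite A"
        using insert(2) fin_cls finite_subset[OF _ finE] unfolding fib_def cls_def
        by (auto intro: finite_subset)
    qed
    have cu: "card (B \<union> A) = card B + card A" if "(B, A) \<in> ?X" for B A
      using dj[OF that] by (simp add: card_Un_disjoint)
    have re: "(\<Sum>A\<in>fib (insert s S). f A) = (\<Sum>(B,A)\<in>?X. f (B \<union> A))" for f :: "'e set \<Rightarrow> int"
      unfolding fib_insert[OF sP insert(2)] by (subst sum.reindex[OF fib_inj[OF insert(2)]]) (simp add: case_prod_unfold)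
    have s0: "(\<Sum>B\<in>Pow (cls s) - {{}}. (-1::int) ^ card B) = -1" using pow_sum0' fin_cls cls_ne[OF sP] by blast
    have s1: "(\<Sum>B\<in>Pow (cls s) - {{}}. (-1::int) ^ card B * int (card B)) = (if s \<in> N then 0 else -1)"
    proof -
      have "card (cls s) \<ge> 1" using cls_ne[OF sP] fin_cls by (simp add: Suc_le_eq card_gt_0_iff)
      then have "card (cls s) = 1 \<longleftrightarrow> s \<notin> N" using sP unfolding N_def by auto
      then show ?thesis using pow_sum1'[OF fin_cls] by simp
    qed
    have A0: "(\<Sum>A\<in>fib (insert s S). (-1::int) ^ card A) = (-1) ^ card (insert s S)"
    proof -
      have "(\<Sum>A\<in>fib (insert s S). (-1::int) ^ card A) = (\<Sum>(B,A)\<in>?X. (-1::int) ^ card B * (-1) ^ card A)"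
        unfolding re
        apply (rule sum.cong[OF refl])
        subgoal for x by (cases x) (simp add: cu power_add)
        done
      also have "\<dots> = (\<Sum>B\<in>Pow (cls s) - {{}}. (-1::int) ^ card B) * (\<Sum>A\<in>fib S. (-1::int) ^ card A)"
        by (simp add: sum_product sum.cartesian_product)
      finally show ?thesis using s0 IH insert(1,2) by simp
    qed
    have A1: "(\<Sum>A\<in>fib (insert s S). (-1::int) ^ card A * int (card A)) = (-1) ^ card (insert s S) * int (card (insert s S - N))"
    proof -
      have "(\<Sum>A\<in>fib (insert s S). (-1::int) ^ card A * int (card A)) =
            (\<Sum>(B,A)\<in>?X. ((-1::int) ^ card B * int (card B)) * (-1) ^ card A + (-1::int) ^ card B * ((-1) ^ card A * int (card A)))"
        unfolding re
        apply (rule sum.cong[OF refl])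
        subgoal for x by (cases x) (simp add: cu power_add algebra_simps)
        done
      also have "\<dots> = (\<Sum>B\<in>Pow (cls s) - {{}}. (-1::int) ^ card B * int (card B)) * (\<Sum>A\<in>fib S. (-1::int) ^ card A)
                     + (\<Sum>B\<in>Pow (cls s) - {{}}. (-1::int) ^ card B) * (\<Sum>A\<in>fib S. (-1::int) ^ card A * int (card A))"
        by (simp only: case_prod_unfold sum.distrib) (simp add: sum_product sum.cartesian_product case_prod_unfold)
      also have "\<dots> = (-1) ^ card (insert s S) * int (card (insert s S - N))"
      proof -
        have fSN: "finite (S - N)" using insert(1) by simp
        have "card (insert s S - N) = (if s \<in> N then card (S - N) else Suc (card (S - N)))"
          using insert(2) fSN by (auto simp: insert_Diff_if)
        have I0: "(\<Sum>A\<in>fib S. (-1::int) ^ card A) = (-1) ^ card S" using IH by blast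
        have I1: "(\<Sum>A\<in>fib S. (-1::int) ^ card A * int (card A)) = (-1) ^ card S * int (card (S - N))" using IH by blast
        show ?thesis unfolding s0 s1 I0 I1 using insert(1,2) \<open>card (insert s S - N) = _\<close> by (auto simp: algebra_simps)
      qed
      finally show ?thesis .
    qed
    show ?case using A0 A1 by blast
  qed
qed

end


lemma coef_arith:
  fixes n c k :: nat
  assumes "1 \<le> c" "c \<le> n" "k \<le> n - 1"
  shows "int (((n-1) - (n-c)) choose (n-1-k)) * (-1) ^ (((n-1)-(n-c)) - (n-1-k)) =
         (if n - c \<le> k then int ((n-1-(n-c)) choose (k-(n-c))) * (-1)^(k-(n-c)) else 0)"
proof (cases "n - c \<le> k")
  case True
  have e1: "((n-1)-(n-c)) - (n-1-k) = k - (n-c)" using assms True by linarith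
  have "n-1-k \<le> (n-1)-(n-c)" using assms True by linarith
  then have "((n-1)-(n-c)) choose (n-1-k) = ((n-1)-(n-c)) choose (((n-1)-(n-c)) - (n-1-k))"
    by (rule binomial_symmetric)
  then show ?thesis using True e1 by simp
next
  case False
  then have "(n-1)-(n-c) < n-1-k" using assms by linarith
  then show ?thesis using False by (simp add: binomial_eq_0)
qed

context tg begin

abbreviation "nn \<equiv> card V"

definition coefk :: "nat \<Rightarrow> nat \<Rightarrow> int" where
  "coefk k d = (if d \<le> k then int ((nn - 1 - d) choose (k - d)) * (-1)^(k-d) else 0)"

definition wt :: "nat \<Rightarrow> nat \<Rightarrow> 'e set \<Rightarrow> int" where
  "wt k j A = coefk k (nn - ncomp V A ends) *
     (int (nullity V A ends choose j) * (-1) ^ (nullity V A ends - j))"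

lemma nc_img: "ncomp V A ends = ncomp V (ends ` A) id"
  unfolding ncomp_def using conn_rel_image by metis

lemma nc_bounds: assumes "S \<subseteq> P" shows "1 \<le> ncomp V S id" "ncomp V S id \<le> nn"
proof -
  interpret pairs V S by (rule pairsI[OF assms])
  show "ncomp V S id \<le> nn" using ncomp_eq twice_k cardW_le by linarith
  show "1 \<le> ncomp V S id"
  proof (cases "W = {}")
    case True
    have "S = {}"
    proof (rule ccontr)
      assume "S \<noteq> {}"
      then obtain s where "s \<in> S" by blast
      then have "card s = 2" "s \<subseteq> W" using S2 by auto
      then show False using True by simp
    qed
    then have "ncomp V S id = nn" by (rule c0)
    moreover have "nn \<ge> 1" using Vne finV by (simp add: Suc_le_eq card_gt_0_iff)
    ultimately show ?thesis by simp
  next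
    case False then show ?thesis using ncomp_eq k_pos cardW_le by linarith
  qed
qed

lemma nnpos: "1 \<le> nn" using Vne finV by (simp add: Suc_le_eq card_gt_0_iff)

lemma tc_sum:
  assumes "i = int nn - 1 - int k"
  shows "tcoeff V E ends i (int j) = (\<Sum>A\<in>Pow E. wt k j A)"
proof (cases "i < 0")
  case True
  then have lhs: "tcoeff V E ends i (int j) = 0" unfolding tcoeff_def by simp
  have "wt k j A = 0" if "A \<in> Pow E" for A
  proof -
    have AP: "ends ` A \<subseteq> P" using that unfolding P_def by auto
    have c1: "1 \<le> ncomp V A ends" using nc_bounds(1)[OF AP] nc_img by simp
    have "coefk k (nn - ncomp V A ends) = 0"
    proof (cases "nn - ncomp V A ends \<le> k")
      case True
      have "nn \<le> k" using \<open>i < 0\<close> assms by simp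
      then have "nn - 1 - (nn - ncomp V A ends) < k - (nn - ncomp V A ends)"
        using c1 True nnpos by linarith
      then show ?thesis unfolding coefk_def by (simp add: binomial_eq_0)
    qed (simp add: coefk_def)
    then show ?thesis unfolding wt_def by simp
  qed
  then show ?thesis using lhs by simp
next
  case False
  then have ni: "nat i = nn - 1 - k" "k \<le> nn - 1" using assms by auto
  have rE: "rank V E ends = nn - 1" unfolding rank_def using ncE by simp
  have "tcoeff V E ends i (int j) = coeff (coeff (tutte V E ends) j) (nn - 1 - k)"
    unfolding tcoeff_def using False ni by simp
  also have "\<dots> = (\<Sum>A\<in>Pow E. wt k j A)"
    unfolding coeff_tutte
  proof (intro sum.cong refl)
    fix A assume "A \<in> Pow E"
    then have AP: "ends ` A \<subseteq> P" unfolding P_def by auto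
    have c1: "1 \<le> ncomp V A ends" "ncomp V A ends \<le> nn" using nc_bounds[OF AP] nc_img by simp_all
    have "int ((rank V E ends - rank V A ends) choose (nn - 1 - k)) * (-1) ^ ((rank V E ends - rank V A ends) - (nn - 1 - k))
          = coefk k (nn - ncomp V A ends)"
      unfolding rE coefk_def using coef_arith[OF c1 ni(2)] by (simp add: rank_def)
    then show "int ((rank V E ends - rank V A ends) choose (nn - 1 - k)) * (-1) ^ ((rank V E ends - rank V A ends) - (nn - 1 - k)) *
        (int (nullity V A ends choose j) * (-1) ^ (nullity V A ends - j)) = wt k j A"
      unfolding wt_def by simp
  qed
  finally show ?thesis .
qed

lemma group_fib: "(\<Sum>A\<in>Pow E. f A) = (\<Sum>S\<in>Pow P. \<Sum>A\<in>fib S. f A)"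
proof -
  have "(\<Sum>S\<in>Pow P. \<Sum>A\<in>{A\<in>Pow E. ends ` A = S}. f A) = (\<Sum>A\<in>Pow E. f A)"
    using finE finP unfolding P_def by (intro sum.group) auto
  moreover have "\<And>S. {A\<in>Pow E. ends ` A = S} = fib S" unfolding fib_def by auto
  ultimately show ?thesis by simp
qed

end


lemma neg_pow_sub: "d \<le> m \<Longrightarrow> (-1::int)^(m-d) = (-1)^m * (-1)^d"
proof -
  assume "d \<le> m"
  then have "(-1::int)^m = (-1)^(m-d) * (-1)^d" by (simp flip: power_add)
  then have "(-1::int)^m * (-1)^d = (-1)^(m-d) * ((-1)^d * (-1)^d)" by simp
  also have "(-1::int)^d * (-1)^d = 1" by (simp flip: power_add add.commute mult_2)
  finally show ?thesis by simp
qed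

lemma bc0: "d \<le> m \<Longrightarrow> int ((m-d) choose 0) * (-1::int)^(m-d-0) = (-1)^d * (-1)^m"
  using neg_pow_sub by simp

lemma bc1: "d \<le> m \<Longrightarrow> int ((m-d) choose 1) * (-1::int)^(m-d-1) = -((-1)^d * (-1)^m * (int m - int d))"
proof -
  assume dm: "d \<le> m"
  show ?thesis
  proof (cases "m = d")
    case True then show ?thesis by simp
  next
    case False
    then have "m - d = Suc (m - d - 1)" using dm by simp
    then have "(-1::int)^(m-d) = - ((-1)^(m-d-1))" by (metis power_Suc mult_minus1)
    then show ?thesis using neg_pow_sub[OF dm] dm by (simp add: of_nat_diff algebra_simps)
  qed
qed

context tg begin

definition small :: "'v set set \<Rightarrow> bool" where
  "small S \<longleftrightarrow> card S \<le> 2 \<or> (card S = 3 \<and> card (\<Union>S) = 3)"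

definition dS :: "'v set set \<Rightarrow> nat" where "dS S = min (card S) 2"

definition fv :: "nat \<Rightarrow> 'v set set \<Rightarrow> int" where
  "fv j S = (if j = 0 then (-1)^dS S * (-1)^card S
             else -((-1)^dS S * (-1)^card S * (int (card (S - N)) - int (dS S))))"

lemma nc_small: assumes "S \<subseteq> P" "small S" shows "ncomp V S id = nn - dS S"
proof -
  interpret pairs V S by (rule pairsI[OF assms(1)])
  consider "card S = 0" | "card S = 1" | "card S = 2" | "card S = 3 \<and> card W = 3"
    using assms(2) unfolding small_def by linarith
  then show ?thesis
  proof cases
    case 1 then have "S = {}" using finS by simp
    then show ?thesis using c0 by (simp add: dS_def)
  next
    case 2 then show ?thesis using c1 by (simp add: dS_def)
  next
    case 3 then show ?thesis using c2 by (simp add: dS_def)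
  next
    case 4 then show ?thesis using c3 by (simp add: dS_def)
  qed
qed

lemma nc_big: assumes "S \<subseteq> P" "\<not> small S" shows "ncomp V S id + 3 \<le> nn"
proof -
  interpret pairs V S by (rule pairsI[OF assms(1)])
  show ?thesis using cbig assms(2) unfolding small_def by simp
qed

lemma fib_wt:
  assumes SP: "S \<subseteq> P" and k: "k \<le> 2" and j: "j \<le> 1"
  shows "(\<Sum>A\<in>fib S. wt k j A) = (if small S then coefk k (dS S) * fv j S else 0)"
proof -
  have ncA: "ncomp V A ends = ncomp V S id" if "A \<in> fib S" for A
    using that nc_img unfolding fib_def by auto
  show ?thesis
  proof (cases "small S")
    case False
    have "wt k j A = 0" if "A \<in> fib S" for A
    proof -
      have "nn - ncomp V A ends \<ge> 3" using nc_big[OF SP False] ncA[OF that] by linarith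
      then have "coefk k (nn - ncomp V A ends) = 0" unfolding coefk_def using k by simp
      then show ?thesis unfolding wt_def by simp
    qed
    then show ?thesis using False by simp
  next
    case True
    have c: "ncomp V S id = nn - dS S" by (rule nc_small[OF SP True])
    have d_le: "dS S \<le> nn" using nc_bounds[OF SP] c by linarith
    have nul: "nullity V A ends = card A - dS S" "dS S \<le> card A" if "A \<in> fib S" for A
    proof -
      show "dS S \<le> card A" using fib_card[OF that] unfolding dS_def by simp
      then show "nullity V A ends = card A - dS S"
        unfolding nullity_def using ncA[OF that] c d_le by simp
    qed
    have wtA: "wt k j A = coefk k (dS S) * (int ((card A - dS S) choose j) * (-1) ^ (card A - dS S - j))"
      if "A \<in> fib S" for A
      unfolding wt_def using ncA[OF that] c d_le nul[OF that] by simp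
    have fs: "(\<Sum>A\<in>fib S. (-1::int) ^ card A) = (-1) ^ card S"
         "(\<Sum>A\<in>fib S. (-1::int) ^ card A * int (card A)) = (-1) ^ card S * int (card (S - N))"
      using fib_sums[OF SP] by auto
    have "(\<Sum>A\<in>fib S. wt k j A) = coefk k (dS S) * (\<Sum>A\<in>fib S. int ((card A - dS S) choose j) * (-1) ^ (card A - dS S - j))"
      by (simp add: wtA sum_distrib_left)
    also have "(\<Sum>A\<in>fib S. int ((card A - dS S) choose j) * (-1) ^ (card A - dS S - j)) = fv j S"
    proof (cases "j = 0")
      case True
      have "(\<Sum>A\<in>fib S. int ((card A - dS S) choose j) * (-1) ^ (card A - dS S - j)) =
            (\<Sum>A\<in>fib S. (-1)^dS S * (-1::int) ^ card A)"
        using True by (intro sum.cong refl) (simp add: neg_pow_sub nul mult.commute)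
      also have "\<dots> = (-1)^dS S * (-1)^card S" by (simp add: sum_distrib_left[symmetric] fs)
      finally show ?thesis using True by (simp add: fv_def)
    next
      case False
      then have j1: "j = 1" using j by simp
      have "(\<Sum>A\<in>fib S. int ((card A - dS S) choose j) * (-1) ^ (card A - dS S - j)) =
            (\<Sum>A\<in>fib S. -((-1)^dS S * ((-1::int) ^ card A * int (card A))) + ((-1)^dS S * int (dS S)) * (-1::int) ^ card A)"
      proof (intro sum.cong refl)
        fix A assume A: "A \<in> fib S"
        have "int ((card A - dS S) choose j) * (-1::int) ^ (card A - dS S - j) =
              -((-1)^dS S * (-1)^card A * (int (card A) - int (dS S)))"
          unfolding j1 by (rule bc1[OF nul(2)[OF A]])
        then show "int ((card A - dS S) choose j) * (-1::int) ^ (card A - dS S - j) =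
            -((-1)^dS S * ((-1::int) ^ card A * int (card A))) + ((-1)^dS S * int (dS S)) * (-1::int) ^ card A"
          by (simp add: algebra_simps)
      qed
      also have "\<dots> = -((-1)^dS S * ((-1) ^ card S * int (card (S - N)))) + ((-1)^dS S * int (dS S)) * (-1)^card S"
        unfolding sum.distrib sum_negf sum_distrib_left[symmetric] fs by (rule refl)
      finally show ?thesis using j1 by (simp add: fv_def algebra_simps)
    qed
    finally show ?thesis using True by simp
  qed
qed

end


lemma double_count:
  assumes "finite F" "finite N" "\<And>S. S \<in> F \<Longrightarrow> finite S"
  shows "(\<Sum>S\<in>F. card (S \<inter> N)) = (\<Sum>s\<in>N. card {S\<in>F. s \<in> S})"
proof -
  have "(\<Sum>S\<in>F. card (S \<inter> N)) = (\<Sum>S\<in>F. \<Sum>s\<in>N. if s \<in> S then 1 else 0)"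
  proof (intro sum.cong refl)
    fix S assume "S \<in> F"
    have "S \<inter> N = {s\<in>N. s \<in> S}" by auto
    then show "card (S \<inter> N) = (\<Sum>s\<in>N. if s \<in> S then 1 else 0)"
      using sum.inter_filter[OF assms(2), of "\<lambda>_. 1::nat" "\<lambda>s. s \<in> S"] by simp
  qed
  also have "\<dots> = (\<Sum>s\<in>N. \<Sum>S\<in>F. if s \<in> S then 1 else 0)" by (rule sum.swap)
  also have "\<dots> = (\<Sum>s\<in>N. card {S\<in>F. s \<in> S})"
    using sum.inter_filter[OF assms(1), of "\<lambda>_. 1::nat"] by simp
  finally show ?thesis .
qed

definition pr2 :: "'a set \<Rightarrow> 'a set set" where "pr2 X = {t. t \<subseteq> X \<and> card t = 2}"

lemma card_pr2: "finite X \<Longrightarrow> card (pr2 X) = card X choose 2"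
  unfolding pr2_def by (rule n_subsets)

lemma card_pos_fin: "card X = Suc m \<Longrightarrow> finite X"
  by (rule card_ge_0_finite) simp

lemma card3_fin: "card X = 3 \<Longrightarrow> finite X"
  by (rule card_ge_0_finite) simp

context tg begin

definition "U1 = {S. S \<subseteq> P \<and> card S = 1}"
definition "U2 = {S. S \<subseteq> P \<and> card S = 2}"
definition "U3 = {S. S \<subseteq> P \<and> card S = 3 \<and> card (\<Union>S) = 3}"
definition "T = {X. X \<subseteq> V \<and> card X = 3 \<and> (\<forall>u\<in>X. \<forall>w\<in>X. u \<noteq> w \<longrightarrow> {u, w} \<in> ends ` E)}"

lemma P2: "s \<in> P \<Longrightarrow> s \<subseteq> V \<and> card s = 2" unfolding P_def using ends2 by auto

lemma finPow: "finite (Pow P)" using finP by simp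

lemma U1_eq: "U1 = (\<lambda>s. {s}) ` P"
  unfolding U1_def by (auto simp: card_Suc_eq)  

lemma small_split: "{S\<in>Pow P. small S} = {{}} \<union> U1 \<union> U2 \<union> U3"
proof -
  have "card S = 0 \<longleftrightarrow> S = {}" if "S \<subseteq> P" for S
  proof -
    have "finite S" using that finP finite_subset by blast
    then show ?thesis by simp
  qed
  then show ?thesis unfolding small_def U1_def U2_def U3_def by (auto simp: le_Suc_eq numeral_2_eq_2)
qed

lemma finU: "finite U1" "finite U2" "finite U3"
  unfolding U1_def U2_def U3_def using finPow by (auto intro: finite_subset)

lemma sum_small:
  "(\<Sum>S\<in>Pow P. if small S then f S else 0) = f {} + (\<Sum>S\<in>U1. f S) + (\<Sum>S\<in>U2. f S) + (\<Sum>S\<in>U3. f S)"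
proof -
  have "(\<Sum>S\<in>Pow P. if small S then f S else 0) = (\<Sum>S\<in>{S\<in>Pow P. small S}. f S)"
    by (subst sum.inter_filter[OF finPow]) (rule refl)
  also have "\<dots> = (\<Sum>S\<in>{{}} \<union> U1 \<union> U2 \<union> U3. f S)" unfolding small_split ..
  also have "\<dots> = f {} + (\<Sum>S\<in>U1. f S) + (\<Sum>S\<in>U2. f S) + (\<Sum>S\<in>U3. f S)"
  proof -
    have d1: "({{}} \<union> U1 \<union> U2) \<inter> U3 = {}" "({{}} \<union> U1) \<inter> U2 = {}" "{{}} \<inter> U1 = {}"
      unfolding U1_def U2_def U3_def by auto
    have f1: "finite ({{}} \<union> U1 \<union> U2)" "finite ({{}} \<union> U1)" "finite {{}::'v set set}" using finU by auto
    have "sum f ({{}} \<union> U1 \<union> U2 \<union> U3) = sum f ({{}} \<union> U1 \<union> U2) + sum f U3"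
      by (rule sum.union_disjoint[OF f1(1) finU(3) d1(1)])
    also have "sum f ({{}} \<union> U1 \<union> U2) = sum f ({{}} \<union> U1) + sum f U2"
      by (rule sum.union_disjoint[OF f1(2) finU(2) d1(2)])
    also have "sum f ({{}} \<union> U1) = sum f {{}} + sum f U1"
      by (rule sum.union_disjoint[OF f1(3) finU(1) d1(3)])
    finally show ?thesis by simp
  qed
  finally show ?thesis .
qed

lemma card_U2: "card U2 = card P choose 2" unfolding U2_def using n_subsets[OF finP] by simp

lemma card_U2_s: assumes "s \<in> P" shows "card {S\<in>U2. s \<in> S} = card P - 1"
proof -
  have "{S\<in>U2. s \<in> S} = (\<lambda>t. {s, t}) ` (P - {s})"
  proof
    show "{S\<in>U2. s \<in> S} \<subseteq> (\<lambda>t. {s, t}) ` (P - {s})"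
    proof
      fix S assume "S \<in> {S\<in>U2. s \<in> S}"
      then have S: "S \<subseteq> P" "card S = 2" "s \<in> S" unfolding U2_def by auto
      then obtain a b where ab: "S = {a,b}" "a \<noteq> b" by (meson card_2_iff)
      show "S \<in> (\<lambda>t. {s, t}) ` (P - {s})"
      proof (cases "a = s")
        case True then show ?thesis using ab S by auto
      next
        case False then have "b = s" using ab S by auto
        then show ?thesis using ab S by (auto simp: insert_commute)
      qed
    qed
    show "(\<lambda>t. {s, t}) ` (P - {s}) \<subseteq> {S\<in>U2. s \<in> S}"
    proof
      fix S assume "S \<in> (\<lambda>t. {s, t}) ` (P - {s})"
      then obtain t where t: "t \<in> P" "t \<noteq> s" "S = {s,t}" by blast
      then have "card S = 2" by simp
      then show "S \<in> {S\<in>U2. s \<in> S}" using t assms unfolding U2_def by auto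
    qed
  qed
  moreover have "inj_on (\<lambda>t. {s, t}) (P - {s})" by (auto simp: inj_on_def doubleton_eq_iff)
  ultimately show ?thesis using card_image[of "\<lambda>t. {s, t}" "P - {s}"] finP assms by (simp add: card_Diff_singleton)
qed

lemma U3_pr2: assumes "S \<in> U3" shows "S = pr2 (\<Union>S)"
proof -
  have S: "S \<subseteq> P" "card S = 3" "card (\<Union>S) = 3" using assms unfolding U3_def by auto
  have fin: "finite (\<Union>S)" using S(3) by (rule card3_fin)
  have "S \<subseteq> pr2 (\<Union>S)"
  proof
    fix s assume s: "s \<in> S"
    then have "s \<subseteq> \<Union>S" by blast
    moreover have "card s = 2" using P2 s S(1) by blast
    ultimately show "s \<in> pr2 (\<Union>S)" by (simp add: pr2_def)
  qed
  moreover have "card (pr2 (\<Union>S)) = 3" using card_pr2[OF fin] S(3) by (simp add: choose_two)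
  moreover have "finite (pr2 (\<Union>S))" unfolding pr2_def using fin by simp
  ultimately show ?thesis using S(2) card_subset_eq[of "pr2 (\<Union>S)" S] by simp
qed

lemma pr2_ins: assumes "card X = 3" "x \<in> X" shows "\<exists>y\<in>X. y \<noteq> x"
proof (rule ccontr)
  assume "\<not> ?thesis"
  then have "X \<subseteq> {x}" by blast
  then have "card X \<le> card {x}" by (rule card_mono[rotated]) simp
  then show False using assms(1) by simp
qed

lemma bij_U3_T: "bij_betw Union U3 T"
proof (rule bij_betw_imageI)
  show "inj_on Union U3"
  proof (rule inj_onI)
    fix S S' assume "S \<in> U3" "S' \<in> U3" "\<Union>S = \<Union>S'"
    then show "S = S'" using U3_pr2[of S] U3_pr2[of S'] by simp
  qed
  show "Union ` U3 = T"
  proof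
    show "Union ` U3 \<subseteq> T"
    proof
      fix X assume "X \<in> Union ` U3"
      then obtain S where S: "S \<in> U3" "X = \<Union>S" by blast
      have "X \<subseteq> V"
      proof
        fix x assume "x \<in> X"
        then obtain s where "s \<in> S" "x \<in> s" using S(2) by blast
        moreover have "s \<in> P" using \<open>s \<in> S\<close> S(1) unfolding U3_def by blast
        ultimately show "x \<in> V" using P2 by blast
      qed
      moreover have "card X = 3" using S U3_def by auto
      moreover have "{u,w} \<in> ends ` E" if "u \<in> X" "w \<in> X" "u \<noteq> w" for u w
      proof -
        have "{u,w} \<in> pr2 X" unfolding pr2_def using that by auto
        then have "{u,w} \<in> S" using U3_pr2[OF S(1)] S(2) by simp
        then show ?thesis using S(1) unfolding U3_def P_def by auto
      qed
      ultimately show "X \<in> T" unfolding T_def by auto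
    qed
    show "T \<subseteq> Union ` U3"
    proof
      fix X assume X: "X \<in> T"
      then have XV: "X \<subseteq> V" and c3: "card X = 3" and pe: "\<forall>u\<in>X. \<forall>w\<in>X. u \<noteq> w \<longrightarrow> {u, w} \<in> ends ` E"
        unfolding T_def by auto
      have fin: "finite X" using c3 by (rule card3_fin)
      have U: "\<Union>(pr2 X) = X"
      proof
        show "\<Union>(pr2 X) \<subseteq> X" unfolding pr2_def by auto
        show "X \<subseteq> \<Union>(pr2 X)"
        proof
          fix x assume x: "x \<in> X"
          then obtain y where "y \<in> X" "y \<noteq> x" using pr2_ins[OF c3] by blast
          then have "{x,y} \<in> pr2 X" unfolding pr2_def using x by auto
          then show "x \<in> \<Union>(pr2 X)" by blast
        qed
      qed
      have "pr2 X \<subseteq> P"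
      proof
        fix t assume "t \<in> pr2 X"
        then have "t \<subseteq> X" "card t = 2" unfolding pr2_def by auto
        then obtain a b where "t = {a,b}" "a \<noteq> b" by (meson card_2_iff)
        then show "t \<in> P" using pe \<open>t \<subseteq> X\<close> unfolding P_def by auto
      qed
      moreover have "card (pr2 X) = 3" using card_pr2[OF fin] c3 by (simp add: choose_two)
      ultimately have "pr2 X \<in> U3" unfolding U3_def using U c3 by auto
      then show "X \<in> Union ` U3" by (rule image_eqI[rotated]) (use U in simp)
    qed
  qed
qed

lemma card_U3: "card U3 = ntriangles V E ends"
proof -
  have "card U3 = card T" using bij_betw_same_card[OF bij_U3_T] .
  then show ?thesis unfolding ntriangles_def T_def by (rule ssubst) (rule refl)
qed

lemma card_U3_s: assumes "s \<in> P" shows "card {S\<in>U3. s \<in> S} = card {X\<in>T. s \<subseteq> X}"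
proof -
  have b: "bij_betw Union {S\<in>U3. s \<in> S} {X\<in>T. s \<subseteq> X}"
  proof (rule bij_betw_imageI)
    have "inj_on Union U3" using bij_U3_T unfolding bij_betw_def by blast
    then show "inj_on Union {S\<in>U3. s \<in> S}" by (rule inj_on_subset) blast
    have "s \<in> S \<longleftrightarrow> s \<subseteq> \<Union>S" if "S \<in> U3" for S
    proof
      assume "s \<subseteq> \<Union>S"
      then have "s \<in> pr2 (\<Union>S)" unfolding pr2_def using P2[OF assms] by auto
      then show "s \<in> S" using U3_pr2[OF that] by simp
    next
      assume "s \<in> S" then show "s \<subseteq> \<Union>S" by blast
    qed
    moreover have im: "Union ` U3 = T" using bij_U3_T unfolding bij_betw_def by blast
    ultimately show "Union ` {S\<in>U3. s \<in> S} = {X\<in>T. s \<subseteq> X}"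
    proof -
      assume eq: "\<And>S. S \<in> U3 \<Longrightarrow> (s \<in> S) = (s \<subseteq> \<Union>S)"
      show ?thesis
      proof
        show "Union ` {S\<in>U3. s \<in> S} \<subseteq> {X\<in>T. s \<subseteq> X}"
        proof
          fix X assume "X \<in> Union ` {S\<in>U3. s \<in> S}"
          then obtain S where S: "S \<in> U3" "s \<in> S" "X = \<Union>S" by blast
          then have "X \<in> T" using im by blast
          moreover have "s \<subseteq> X" using S by blast
          ultimately show "X \<in> {X\<in>T. s \<subseteq> X}" by simp
        qed
        show "{X\<in>T. s \<subseteq> X} \<subseteq> Union ` {S\<in>U3. s \<in> S}"
        proof
          fix X assume "X \<in> {X\<in>T. s \<subseteq> X}"
          then have "X \<in> T" "s \<subseteq> X" by auto
          then obtain S where S: "S \<in> U3" "X = \<Union>S" using im by blast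
          then have "s \<in> S" using eq[OF S(1)] \<open>s \<subseteq> X\<close> by simp
          then show "X \<in> Union ` {S\<in>U3. s \<in> S}" using S by blast
        qed
      qed
    qed
  qed
  show ?thesis using bij_betw_same_card[OF b] .
qed

end


lemma npar_img: "finite E' \<Longrightarrow> npar E' f = card (f ` E')"
proof -
  assume fin: "finite E'"
  let ?C = "\<lambda>v. {g\<in>E'. f g = v}"
  have "parallel_classes E' f = ?C ` (f ` E')" unfolding parallel_classes_def by auto
  moreover have "inj_on ?C (f ` E')"
  proof (rule inj_onI)
    fix a b assume "a \<in> f ` E'" "b \<in> f ` E'" "?C a = ?C b"
    then obtain e where "e \<in> E'" "f e = a" by blast
    then have "e \<in> ?C b" using \<open>?C a = ?C b\<close> by blast
    then show "a = b" using \<open>f e = a\<close> by simp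
  qed
  ultimately show ?thesis unfolding npar_def by (simp add: card_image)
qed

context tg begin

lemma pc_eq: "parallel_classes E ends = cls ` P"
  unfolding parallel_classes_def cls_def P_def by auto

lemma inj_cls: "inj_on cls P"
proof (rule inj_onI)
  fix a b assume "a \<in> P" "b \<in> P" "cls a = cls b"
  then obtain e where "e \<in> cls a" using cls_ne by blast
  then have "e \<in> cls b" using \<open>cls a = cls b\<close> by simp
  then show "a = b" using \<open>e \<in> cls a\<close> unfolding cls_def by simp
qed

lemma npar_P: "npar E ends = card P"
  unfolding npar_def pc_eq using card_image[OF inj_cls] .

lemma nontriv_eq: "{A \<in> parallel_classes E ends. 2 \<le> card A} = cls ` N"
  unfolding pc_eq N_def by auto

lemma N_sub: "N \<subseteq> P" unfolding N_def by auto

lemma npar_nontriv_N: "npar_nontriv E ends = card N"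
  unfolding npar_nontriv_def nontriv_eq using card_image[OF inj_on_subset[OF inj_cls N_sub]] .

lemma sum_nontriv: "(\<Sum>A\<in>{A \<in> parallel_classes E ends. 2 \<le> card A}. g A) = (\<Sum>s\<in>N. g (cls s))"
  unfolding nontriv_eq by (rule sum.reindex[OF inj_on_subset[OF inj_cls N_sub], unfolded comp_def])

end

locale tgs = tg +
  fixes s u w
  assumes sP: "s \<in> P" and suw: "s = {u, w}" "u \<noteq> w"
begin

abbreviation "cl x \<equiv> conn_rel V {s} id `` {x}"
definition "Ax = {x \<in> V - s. {u,x} \<in> P \<and> {w,x} \<in> P}"
definition "D = (\<lambda>x. {w,x}) ` Ax"
definition "phi t = cl ` t"

lemma sV: "s \<subseteq> V" using P2[OF sP] by simp
lemma uw: "u \<in> s" "w \<in> s" "u \<in> V" "w \<in> V" using suw sV by auto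

lemma cr_eq: "conn_rel V (cls s) ends = conn_rel V {s} id"
proof -
  have "ends ` cls s = {s}" using cls_ne[OF sP] unfolding cls_def by auto
  then show ?thesis using conn_rel_image by metis
qed

lemma cl_in: assumes "x \<in> s" shows "cl x = s"
proof -
  interpret pairs V "{s}" using pairsI sP by simp
  have "cl x \<subseteq> s" using class_inside[of x] assms by simp
  moreover have "s \<subseteq> cl x"
  proof
    fix y assume "y \<in> s"
    then have "(x,y) \<in> conn_rel V {s} id" using conn_rel_edge[of s "{s}" x y V] assms sV by simp
    then show "y \<in> cl x" by simp
  qed
  ultimately show ?thesis by blast
qed

lemma cl_out: assumes "x \<in> V" "x \<notin> s" shows "cl x = {x}"
proof -
  interpret pairs V "{s}" using pairsI sP by simp
  show ?thesis using class_outside[of x] assms by simp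
qed

lemma s_not_single: "s \<noteq> {y}" using suw by auto

lemma tP: assumes "t \<in> P" "t \<noteq> s"
  shows "(t \<inter> s = {} \<and> phi t = (\<lambda>y. {y}) ` t) \<or>
         (\<exists>z y. z \<in> s \<and> y \<in> V \<and> y \<notin> s \<and> t = {z, y} \<and> phi t = {s, {y}})"
proof -
  have t2: "t \<subseteq> V" "card t = 2" using P2[OF assms(1)] by auto
  then obtain a b where ab: "t = {a,b}" "a \<noteq> b" by (meson card_2_iff)
  have abV: "a \<in> V" "b \<in> V" using ab t2 by auto
  show ?thesis
  proof (cases "t \<inter> s = {}")
    case True
    then have "a \<notin> s" "b \<notin> s" using ab by auto
    then have "phi t = (\<lambda>y. {y}) ` t" unfolding phi_def ab using cl_out abV by simp
    then show ?thesis using True by simp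
  next
    case False
    have "\<not> (a \<in> s \<and> b \<in> s)"
    proof
      assume "a \<in> s \<and> b \<in> s"
      then have "t \<subseteq> s" using ab by auto
      moreover have "finite s" using sV finite_subset finV by blast
      ultimately have "t = s" using card_subset_eq[of s t] t2 P2[OF sP] by simp
      then show False using assms(2) by simp
    qed
    moreover have "a \<in> s \<or> b \<in> s" using False ab by auto
    ultimately have "(a \<in> s \<and> b \<notin> s) \<or> (b \<in> s \<and> a \<notin> s)" by blast
    then show ?thesis
    proof
      assume h: "a \<in> s \<and> b \<notin> s"
      then have "phi t = {s, {b}}" unfolding phi_def ab using cl_in cl_out abV by simp
      then show ?thesis using h ab abV by blast
    next
      assume h: "b \<in> s \<and> a \<notin> s"
      then have "phi t = {s, {a}}" unfolding phi_def ab using cl_in cl_out abV by (simp add: insert_commute)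
      moreover have "t = {b, a}" using ab by (simp add: insert_commute)
      ultimately show ?thesis using h abV by blast
    qed
  qed
qed

lemma s_in_phi: assumes "t \<in> P" "t \<noteq> s" shows "s \<in> phi t \<longleftrightarrow> t \<inter> s \<noteq> {}"
  using tP[OF assms] s_not_single by auto

lemma finAx: "finite Ax" unfolding Ax_def using finV by simp

lemma D_sub: "D \<subseteq> P - {s}"
proof
  fix t assume "t \<in> D"
  then obtain x where x: "x \<in> Ax" "t = {w,x}" unfolding D_def by blast
  then have "t \<in> P" "x \<notin> s" unfolding Ax_def by auto
  moreover have "t \<noteq> s" using x \<open>x \<notin> s\<close> suw by auto
  ultimately show "t \<in> P - {s}" by simp
qed

lemma card_D: "card D = card Ax"
proof -
  have "inj_on (\<lambda>x. {w,x}) Ax"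
  proof (rule inj_onI)
    fix x y assume "x \<in> Ax" "y \<in> Ax" "{w,x} = {w,y}"
    moreover have "x \<noteq> w" "y \<noteq> w" using \<open>x \<in> Ax\<close> \<open>y \<in> Ax\<close> uw unfolding Ax_def by auto
    ultimately show "x = y" by (auto simp: doubleton_eq_iff)
  qed
  then show ?thesis unfolding D_def by (rule card_image)
qed

lemma phi_img: "phi ` (P - {s}) = phi ` (P - {s} - D)"
proof
  show "phi ` (P - {s} - D) \<subseteq> phi ` (P - {s})" by blast
  show "phi ` (P - {s}) \<subseteq> phi ` (P - {s} - D)"
  proof
    fix X assume "X \<in> phi ` (P - {s})"
    then obtain t where t: "t \<in> P - {s}" "X = phi t" by blast
    show "X \<in> phi ` (P - {s} - D)"
    proof (cases "t \<in> D")
      case False then show ?thesis using t by blast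
    next
      case True
      then obtain x where x: "x \<in> Ax" "t = {w,x}" unfolding D_def by blast
      then have xV: "x \<in> V" "x \<notin> s" and ux: "{u,x} \<in> P" unfolding Ax_def by auto
      have "{u,x} \<noteq> s" using xV suw by auto
      moreover have "{u,x} \<notin> D"
      proof
        assume "{u,x} \<in> D"
        then obtain y where y: "y \<in> Ax" "{u,x} = {w,y}" unfolding D_def by blast
        then have "u = y" using suw(2) by (auto simp: doubleton_eq_iff)
        then show False using y(1) uw unfolding Ax_def by auto
      qed
      moreover have "phi {u,x} = phi t" unfolding phi_def x(2) using cl_in uw cl_out xV by simp
      ultimately show ?thesis using t ux by (metis DiffI image_eqI singletonD)
    qed
  qed
qed

lemma tPA: assumes "t \<in> P" "t \<noteq> s" "t \<inter> s = {}" shows "phi t = (\<lambda>y. {y}) ` t"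
proof -
  have t2: "t \<subseteq> V" "card t = 2" using P2[OF assms(1)] by auto
  then obtain a b where ab: "t = {a,b}" "a \<noteq> b" by (meson card_2_iff)
  have abV: "a \<in> V" "b \<in> V" using ab t2 by auto
  have "a \<notin> s" "b \<notin> s" using ab assms(3) by auto
  then show ?thesis unfolding phi_def ab using cl_out abV by simp
qed

lemma tPB: assumes "t \<in> P" "t \<noteq> s" "t \<inter> s \<noteq> {}"
  shows "\<exists>z y. z \<in> s \<and> y \<in> V \<and> y \<notin> s \<and> t = {z, y} \<and> phi t = {s, {y}}"
proof -
  have "\<not> (t \<inter> s = {} \<and> phi t = (\<lambda>y. {y}) ` t)" using assms(3) by blast
  then show ?thesis using tP[OF assms(1,2)] by blast
qed

lemma phi_inj: "inj_on phi (P - {s} - D)"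
proof (rule inj_onI)
  fix t t' assume t: "t \<in> P - {s} - D" and t': "t' \<in> P - {s} - D" and e: "phi t = phi t'"
  have tt: "t \<in> P" "t \<noteq> s" "t \<notin> D" "t' \<in> P" "t' \<noteq> s" "t' \<notin> D" using t t' by auto
  have iff: "t \<inter> s \<noteq> {} \<longleftrightarrow> t' \<inter> s \<noteq> {}"
    using s_in_phi[OF tt(1,2)] s_in_phi[OF tt(4,5)] e by simp
  show "t = t'"
  proof (cases "t \<inter> s = {}")
    case True
    then have "t' \<inter> s = {}" using iff by simp
    then have "phi t = (\<lambda>y. {y}) ` t" "phi t' = (\<lambda>y. {y}) ` t'"
      using tPA[OF tt(1,2) True] tPA[OF tt(4,5)] by auto
    moreover have "\<Union>((\<lambda>y. {y}) ` X) = X" for X :: "'v set" by blast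
    ultimately have U: "\<Union>(phi t) = t" "\<Union>(phi t') = t'" by simp_all
    have "t = \<Union>(phi t)" using U(1) by simp
    also have "\<dots> = \<Union>(phi t')" using e by (rule arg_cong)
    also have "\<dots> = t'" by (rule U(2))
    finally show ?thesis .
  next
    case False
    then have F': "t' \<inter> s \<noteq> {}" using iff by simp
    obtain z y where zy: "z \<in> s" "y \<in> V" "y \<notin> s" "t = {z, y}" "phi t = {s, {y}}"
      using tPB[OF tt(1,2) False] by blast
    obtain z' y' where zy': "z' \<in> s" "y' \<in> V" "y' \<notin> s" "t' = {z', y'}" "phi t' = {s, {y'}}"
      using tPB[OF tt(4,5) F'] by blast
    have "{y} \<in> phi t" using zy(5) by simp
    then have "{y} \<in> {s, {y'}}" using e zy'(5) by simp
    then have "{y} = s \<or> {y} = {y'}" by simp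
    moreover have "{y} \<noteq> s" using s_not_single[of y] by (rule not_sym)
    ultimately have yy: "y = y'" by simp
    show ?thesis
    proof (rule ccontr)
      assume "t \<noteq> t'"
      then have zz: "z \<noteq> z'" using zy(4) zy'(4) yy by auto
      have zc: "z = u \<or> z = w" "z' = u \<or> z' = w" using zy(1) zy'(1) suw by auto
      have "{u,y} \<in> P \<and> {w,y} \<in> P \<and> (t = {w,y} \<or> t' = {w,y})"
      proof (cases "z = u")
        case True
        then have "z' = w" using zc zz by blast
        then show ?thesis using True tt(1,4) zy(4) zy'(4) yy by simp
      next
        case False
        then have "z = w" "z' = u" using zc zz by blast+
        then show ?thesis using tt(1,4) zy(4) zy'(4) yy by simp
      qed
      then have "y \<in> Ax" "t = {w,y} \<or> t' = {w,y}" unfolding Ax_def using zy(2,3) by auto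
      then have "{w,y} \<in> D" unfolding D_def by blast
      then show False using tt(3,6) \<open>t = {w,y} \<or> t' = {w,y}\<close> by blast
    qed
  qed
qed

lemma card_phi: "card (phi ` (P - {s})) = card P - 1 - card Ax"
proof -
  have "card (phi ` (P - {s})) = card (P - {s} - D)"
    unfolding phi_img by (rule card_image[OF phi_inj])
  also have "\<dots> = card (P - {s}) - card D"
    using D_sub finP by (intro card_Diff_subset) (auto intro: finite_subset)
  also have "\<dots> = card P - 1 - card Ax" using card_D finP sP by (simp add: card_Diff_singleton)
  finally show ?thesis .
qed

lemma npar_contract:
  "npar (contract_E V E ends (cls s)) (contract_ends V E ends (cls s)) = card P - 1 - card Ax"
proof -
  have fin: "finite (E - cls s)" using finE by simp
  have ce: "contract_ends V E ends (cls s) = (\<lambda>e. phi (ends e))"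
    unfolding contract_ends_def cr_eq phi_def by (rule ext) (rule refl)
  have im: "ends ` (E - cls s) = P - {s}" unfolding cls_def P_def by auto
  have "(\<lambda>e. phi (ends e)) ` (E - cls s) = phi ` (P - {s})"
    unfolding im[symmetric] by (simp add: image_image)
  then show ?thesis unfolding contract_E_def npar_img[OF fin] ce card_phi[symmetric] by simp
qed

lemma card_T_s: "card {X\<in>T. s \<subseteq> X} = card Ax"
proof -
  have fs: "finite s" using sV finV finite_subset by blast
  have cs: "card s = 2" using P2[OF sP] by simp
  have "{X\<in>T. s \<subseteq> X} = (\<lambda>x. insert x s) ` Ax"
  proof
    show "{X\<in>T. s \<subseteq> X} \<subseteq> (\<lambda>x. insert x s) ` Ax"
    proof
      fix X assume X: "X \<in> {X\<in>T. s \<subseteq> X}"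
      then have XV: "X \<subseteq> V" and c3: "card X = 3" and sX: "s \<subseteq> X"
        and pe: "\<forall>a\<in>X. \<forall>b\<in>X. a \<noteq> b \<longrightarrow> {a, b} \<in> ends ` E" unfolding T_def by auto
      have fX: "finite X" using c3 by (rule card3_fin)
      have "card (X - s) = 1" using card_Diff_subset[OF fs sX] c3 cs by simp
      then obtain x where x: "X - s = {x}" using card_1_singletonE by blast
      then have xX: "x \<in> X" "x \<notin> s" by auto
      have XE: "X = insert x s" using x sX by blast
      have "x \<noteq> u" "x \<noteq> w" using xX(2) uw by auto
      then have "{u,x} \<in> P" "{w,x} \<in> P" using pe xX(1) sX uw unfolding P_def by auto
      then have "x \<in> Ax" unfolding Ax_def using xX XV by auto
      then show "X \<in> (\<lambda>x. insert x s) ` Ax" using XE by blast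
    qed
    show "(\<lambda>x. insert x s) ` Ax \<subseteq> {X\<in>T. s \<subseteq> X}"
    proof
      fix X assume "X \<in> (\<lambda>x. insert x s) ` Ax"
      then obtain x where x: "x \<in> Ax" "X = insert x s" by blast
      then have xV: "x \<in> V" "x \<notin> s" and ux: "{u,x} \<in> P" and wx: "{w,x} \<in> P" unfolding Ax_def by auto
      have "X \<subseteq> V" using x(2) xV sV by auto
      moreover have "card X = 3" using x(2) xV fs cs by simp
      moreover have "{a, b} \<in> ends ` E" if ab: "a \<in> X" "b \<in> X" "a \<noteq> b" for a b
      proof -
        have X3: "X = {x, u, w}" using x(2) suw by simp
        have Ps: "{u,w} \<in> P" using sP suw by simp
        have "{a,b} = {u,w} \<or> {a,b} = {u,x} \<or> {a,b} = {w,x}"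
          using ab unfolding X3 by (auto simp: insert_commute)
        then have "{a,b} \<in> P" using Ps ux wx by auto
        then show ?thesis unfolding P_def .
      qed
      ultimately show "X \<in> {X\<in>T. s \<subseteq> X}" unfolding T_def using x(2) by auto
    qed
  qed
  moreover have "inj_on (\<lambda>x. insert x s) Ax"
  proof (rule inj_onI)
    fix a b assume "a \<in> Ax" "b \<in> Ax" "insert a s = insert b s"
    moreover have "a \<notin> s" "b \<notin> s" using \<open>a \<in> Ax\<close> \<open>b \<in> Ax\<close> unfolding Ax_def by auto
    ultimately show "a = b" by blast
  qed
  ultimately show ?thesis by (simp add: card_image)
qed

end


context tg begin

lemma main_sum:
  assumes "k \<le> 2" "j \<le> 1"
  shows "tcoeff V E ends (int nn - 1 - int k) (int j) =
    coefk k 0 * fv j {} + coefk k 1 * (\<Sum>S\<in>U1. fv j S) + coefk k 2 * (\<Sum>S\<in>U2. fv j S)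
    + coefk k 2 * (\<Sum>S\<in>U3. fv j S)"
proof -
  have "tcoeff V E ends (int nn - 1 - int k) (int j) = (\<Sum>S\<in>Pow P. \<Sum>A\<in>fib S. wt k j A)"
    using tc_sum[OF refl] group_fib by simp
  also have "\<dots> = (\<Sum>S\<in>Pow P. if small S then coefk k (dS S) * fv j S else 0)"
    by (intro sum.cong refl) (use fib_wt assms in blast)
  also have "\<dots> = coefk k (dS {}) * fv j {} + (\<Sum>S\<in>U1. coefk k (dS S) * fv j S) + (\<Sum>S\<in>U2. coefk k (dS S) * fv j S)
    + (\<Sum>S\<in>U3. coefk k (dS S) * fv j S)" by (rule sum_small)
  also have "(\<Sum>S\<in>U1. coefk k (dS S) * fv j S) = coefk k 1 * (\<Sum>S\<in>U1. fv j S)"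
    unfolding sum_distrib_left by (intro sum.cong refl) (simp add: U1_def dS_def)
  also have "(\<Sum>S\<in>U2. coefk k (dS S) * fv j S) = coefk k 2 * (\<Sum>S\<in>U2. fv j S)"
    unfolding sum_distrib_left by (intro sum.cong refl) (simp add: U2_def dS_def)
  also have "(\<Sum>S\<in>U3. coefk k (dS S) * fv j S) = coefk k 2 * (\<Sum>S\<in>U3. fv j S)"
    unfolding sum_distrib_left by (intro sum.cong refl) (simp add: U3_def dS_def)
  finally show ?thesis by (simp add: dS_def)
qed

lemma fv_empty: "fv 0 {} = 1" "fv 1 {} = 0" by (simp_all add: fv_def dS_def)

lemma sumU1_0: "(\<Sum>S\<in>U1. fv 0 S) = int (card P)"
proof -
  have "(\<Sum>S\<in>U1. fv 0 S) = (\<Sum>S\<in>U1. 1)" by (intro sum.cong refl) (simp add: U1_def fv_def dS_def)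
  also have "\<dots> = int (card U1)" by simp
  also have "card U1 = card P" unfolding U1_eq by (rule card_image) (simp add: inj_on_def)
  finally show ?thesis .
qed

lemma sumU1_1: "(\<Sum>S\<in>U1. fv 1 S) = int (card N)"
proof -
  have inj: "inj_on (\<lambda>s. {s}) P" by (simp add: inj_on_def)
  have "(\<Sum>S\<in>U1. fv 1 S) = (\<Sum>s\<in>P. fv 1 {s})" unfolding U1_eq by (rule sum.reindex[OF inj, unfolded comp_def])
  also have "\<dots> = (\<Sum>s\<in>P. if s \<in> N then 1 else 0)"
    by (intro sum.cong refl) (simp add: fv_def dS_def insert_Diff_if)
  also have "\<dots> = (\<Sum>s\<in>{s\<in>P. s \<in> N}. 1)" using sum.inter_filter[OF finP, of "\<lambda>_. (1::int)" "\<lambda>s. s \<in> N"] by (rule sym)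
  also have "{s\<in>P. s \<in> N} = N" using N_sub by blast
  finally show ?thesis by simp
qed

lemma sumU2_0: "(\<Sum>S\<in>U2. fv 0 S) = int (card P choose 2)"
proof -
  have "(\<Sum>S\<in>U2. fv 0 S) = (\<Sum>S\<in>U2. 1)" by (intro sum.cong refl) (simp add: U2_def fv_def dS_def)
  then show ?thesis using card_U2 by simp
qed

lemma cardSN: assumes "S \<subseteq> P" shows "card S = card (S - N) + card (S \<inter> N)"
proof -
  have "finite S" using assms finP finite_subset by blast
  moreover have d: "(S - N) \<inter> (S \<inter> N) = {}" by blast
  ultimately show ?thesis using card_Un_disjoint[of "S - N" "S \<inter> N"] by (simp add: Un_Diff_Int)
qed

lemma finU2S: "S \<in> U2 \<Longrightarrow> finite S" "S \<in> U3 \<Longrightarrow> finite S"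
  unfolding U2_def U3_def using finP finite_subset by auto

lemma sumU2_1: "(\<Sum>S\<in>U2. fv 1 S) = int (card N) * (int (card P) - 1)"
proof -
  have "(\<Sum>S\<in>U2. fv 1 S) = (\<Sum>S\<in>U2. int (card (S \<inter> N)))"
  proof (intro sum.cong refl)
    fix S assume S: "S \<in> U2"
    then have "card S = 2" "S \<subseteq> P" unfolding U2_def by auto
    then show "fv 1 S = int (card (S \<inter> N))" using cardSN[of S] by (simp add: fv_def dS_def)
  qed
  also have "\<dots> = int (\<Sum>S\<in>U2. card (S \<inter> N))" by simp
  also have "(\<Sum>S\<in>U2. card (S \<inter> N)) = (\<Sum>s\<in>N. card {S\<in>U2. s \<in> S})"
    by (rule double_count[OF finU(2)]) (use N_sub finP finite_subset finU2S in auto)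
  also have "\<dots> = (\<Sum>s\<in>N. card P - 1)" using card_U2_s N_sub by (intro sum.cong refl) auto
  finally have e: "(\<Sum>S\<in>U2. fv 1 S) = int (card N * (card P - 1))" by simp
  show ?thesis
  proof (cases "N = {}")
    case True then show ?thesis using e by simp
  next
    case False
    then have "P \<noteq> {}" using N_sub by blast
    then have "card P \<ge> 1" using finP by (simp add: Suc_le_eq card_gt_0_iff)
    then show ?thesis using e by (simp add: of_nat_diff)
  qed
qed

lemma sumU3_0: "(\<Sum>S\<in>U3. fv 0 S) = - int (ntriangles V E ends)"
proof -
  have "(\<Sum>S\<in>U3. fv 0 S) = (\<Sum>S\<in>U3. -1)" by (intro sum.cong refl) (simp add: U3_def fv_def dS_def)
  then show ?thesis using card_U3 by simp
qed

lemma sumU3_1: "(\<Sum>S\<in>U3. fv 1 S) = int (ntriangles V E ends) - int (\<Sum>s\<in>N. card {S\<in>U3. s \<in> S})"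
proof -
  have "(\<Sum>S\<in>U3. fv 1 S) = (\<Sum>S\<in>U3. 1 - int (card (S \<inter> N)))"
  proof (intro sum.cong refl)
    fix S assume S: "S \<in> U3"
    then have "card S = 3" "S \<subseteq> P" unfolding U3_def by auto
    then show "fv 1 S = 1 - int (card (S \<inter> N))" using cardSN[of S] by (simp add: fv_def dS_def)
  qed
  also have "\<dots> = int (card U3) - int (\<Sum>S\<in>U3. card (S \<inter> N))" by (simp add: sum_subtractf)
  also have "(\<Sum>S\<in>U3. card (S \<inter> N)) = (\<Sum>s\<in>N. card {S\<in>U3. s \<in> S})"
    by (rule double_count[OF finU(3)]) (use N_sub finP finite_subset finU2S in auto)
  finally show ?thesis using card_U3 by simp
qed

lemma contr_s: assumes "s \<in> P"
  shows "int (npar (contract_E V E ends (cls s)) (contract_ends V E ends (cls s))) =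
         int (card P) - 1 - int (card {S\<in>U3. s \<in> S})"
proof -
  obtain u w where uw: "s = {u,w}" "u \<noteq> w" using P2[OF assms] by (meson card_2_iff)
  interpret tgs V E ends s u w by unfold_locales (use assms uw in auto)
  have le: "card Ax \<le> card P - 1"
  proof -
    have "card D \<le> card (P - {s})" using D_sub finP by (intro card_mono) auto
    then show ?thesis using card_D finP assms by (simp add: card_Diff_singleton)
  qed
  have "card P \<noteq> 0" using assms finP by auto
  then have p1: "card P \<ge> 1" by linarith
  show ?thesis using npar_contract card_T_s card_U3_s[OF assms] le p1 by (simp add: of_nat_diff)
qed

lemma coefk_vals:
  "coefk 0 0 = 1" "coefk 0 1 = 0" "coefk 0 2 = 0"
  "coefk 1 0 = - (int nn - 1)" "coefk 1 1 = 1" "coefk 1 2 = 0"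
  "coefk 2 0 = int ((nn - 1) choose 2)" "coefk 2 1 = - int (nn - 2)" "coefk 2 2 = 1"
  using nnpos by (simp_all add: coefk_def of_nat_diff)

lemma P_nn: "P \<noteq> {} \<Longrightarrow> 2 \<le> nn"
proof -
  assume "P \<noteq> {}"
  then obtain s where "s \<in> P" by blast
  then have "s \<subseteq> V" "card s = 2" using P2 by auto
  then have "card s \<le> nn" using card_mono[OF finV] by blast
  then show "2 \<le> nn" using \<open>card s = 2\<close> by simp
qed

end


theorem theorem2:
  fixes V :: "'v set" and E :: "'e set" and ends :: "'e \<Rightarrow> 'v set"
  assumes "multigraph V E ends"
    and "connected_graph V E ends"
    and "loopless E ends"
    and "bridgeless V E ends"
  defines "n \<equiv> int (card V)"
    and "p \<equiv> npar E ends"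
    and "ps \<equiv> npar_nontriv E ends"
    and "\<Delta> \<equiv> ntriangles V E ends"
  shows "tcoeff V E ends (n - 1) 0 = 1 \<and>
         tcoeff V E ends (n - 2) 0 = int p - n + 1 \<and>
         tcoeff V E ends (n - 3) 0 =
           int ((card V - 1) choose 2) - (n - 2) * int p + int (p choose 2) - int \<Delta> \<and>
         tcoeff V E ends (n - 2) 1 = int ps \<and>
         tcoeff V E ends (n - 3) 1 =
           - int ps * (n - 2)
           + (\<Sum>A\<in>{A \<in> parallel_classes E ends. card A \<ge> 2}.
                int (npar (contract_E V E ends A) (contract_ends V E ends A)))
           + int \<Delta>"
proof -
  interpret tg V E ends by unfold_locales (use assms(1-3) in auto)
  have pP: "p = card P" unfolding p_def by (rule npar_P)
  have psN: "ps = card N" unfolding ps_def by (rule npar_nontriv_N)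
  have e1: "n - 1 = int nn - 1 - int 0" unfolding n_def by simp
  have e2: "n - 2 = int nn - 1 - int 1" unfolding n_def by simp
  have e3: "n - 3 = int nn - 1 - int 2" unfolding n_def by simp
  have z: "(0::int) = int 0" "(1::int) = int 1" by simp_all
  have nn2P: "int (nn - 2) * int (card P) = (n - 2) * int (card P)"
  proof (cases "P = {}")
    case True then show ?thesis by simp
  next
    case False then have "2 \<le> nn" by (rule P_nn)
    then show ?thesis unfolding n_def by (simp add: of_nat_diff)
  qed
  have nn2N: "int (nn - 2) * int (card N) = (n - 2) * int (card N)"
  proof (cases "N = {}")
    case True then show ?thesis by simp
  next
    case False then have "P \<noteq> {}" using N_sub by blast
    then have "2 \<le> nn" by (rule P_nn)
    then show ?thesis unfolding n_def by (simp add: of_nat_diff)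
  qed
  have cv: "coefk 0 (Suc 0) = 0" "coefk (Suc 0) (Suc 0) = 1" "coefk 2 (Suc 0) = - int (nn - 2)"
    "coefk (Suc 0) 0 = - (int nn - 1)" "coefk (Suc 0) 2 = 0"
    "fv (Suc 0) {} = 0" "sum (fv (Suc 0)) U1 = int (card N)"
    "sum (fv (Suc 0)) U2 = int (card N) * (int (card P) - 1)"
    "sum (fv (Suc 0)) U3 = int (ntriangles V E ends) - int (\<Sum>s\<in>N. card {S\<in>U3. s \<in> S})"
    using coefk_vals fv_empty sumU1_1 sumU2_1 sumU3_1 by simp_all
  have t1: "tcoeff V E ends (n - 1) 0 = 1"
    unfolding e1 z(1) using main_sum[of 0 0] by (simp add: cv coefk_vals fv_empty)
  have t2: "tcoeff V E ends (n - 2) 0 = int p - n + 1"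
    unfolding e2 z(1) using main_sum[of 1 0] by (simp add: cv coefk_vals fv_empty sumU1_0 pP n_def)
  have t3: "tcoeff V E ends (n - 3) 0 =
           int ((card V - 1) choose 2) - (n - 2) * int p + int (p choose 2) - int \<Delta>"
    unfolding e3 z(1) using main_sum[of 2 0] nn2P
    by (simp add: cv coefk_vals fv_empty sumU1_0 sumU2_0 sumU3_0 pP \<Delta>_def)
  have t4: "tcoeff V E ends (n - 2) 1 = int ps"
    unfolding e2 z(2) using main_sum[of 1 1] by (simp add: cv coefk_vals fv_empty sumU1_1 psN)
  have cs: "(\<Sum>A\<in>{A \<in> parallel_classes E ends. card A \<ge> 2}.
                int (npar (contract_E V E ends A) (contract_ends V E ends A))) =
            int (card N) * (int (card P) - 1) - int (\<Sum>s\<in>N. card {S\<in>U3. s \<in> S})"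
  proof -
    have "(\<Sum>A\<in>{A \<in> parallel_classes E ends. card A \<ge> 2}.
                int (npar (contract_E V E ends A) (contract_ends V E ends A))) =
          (\<Sum>s\<in>N. int (npar (contract_E V E ends (cls s)) (contract_ends V E ends (cls s))))"
      by (rule sum_nontriv)
    also have "\<dots> = (\<Sum>s\<in>N. (int (card P) - 1) - int (card {S\<in>U3. s \<in> S}))"
      using contr_s N_sub by (intro sum.cong refl) auto
    also have "\<dots> = int (card N) * (int (card P) - 1) - int (\<Sum>s\<in>N. card {S\<in>U3. s \<in> S})"
      by (simp add: sum_subtractf)
    finally show ?thesis .
  qed
  have t5: "tcoeff V E ends (n - 3) 1 =
           - int ps * (n - 2)
           + (\<Sum>A\<in>{A \<in> parallel_classes E ends. card A \<ge> 2}.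
                int (npar (contract_E V E ends A) (contract_ends V E ends A)))
           + int \<Delta>"
    unfolding e3 z(2) cs using main_sum[of 2 1] nn2N
    by (simp add: cv coefk_vals fv_empty sumU1_1 sumU2_1 sumU3_1 psN \<Delta>_def algebra_simps)
  show ?thesis using t1 t2 t3 t4 t5 by blast
qed


end
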